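(* Fix an integer $k\ge1$, $q\in(0,1)$ and $\epsilon_\delta>0$, and set $$\delta(k)=\frac{3}{4q}\,\lambda_{\max}^2(AC_kA^T)\frac{\|\bar{\mathbf r}_k\|_2^4}{\big(\mu+\lambda_{\min}(AC_kA^T)\big)^4}+\epsilon_\delta\,k .$$ Define $\zeta_\delta:[1,\infty)\to\mathbb{R}$ by $$\zeta_\delta(\alpha)=1+\frac{\big(\bar{\mathbf r}_k^TM(\alpha)^{-1}\bar{\mathbf r}_k\big)\big(\bar{\mathbf r}_k^TM(\alpha)^{-1}AC_kA^TM(\alpha)^{-1}\bar{\mathbf r}_k\big)}{4\delta(k)},\qquad M(\alpha)=\mu I_m+\alpha AC_kA^T.$$ Then $\zeta_\delta$ maps $[1,\infty)$ into $[1,\infty)$ and satisfies $|\zeta_\delta'(\alpha)|\le q$ for all $\alpha\in[1,\infty)$; consequently the equation $\alpha=\zeta_\delta(\alpha)$ has a unique solution in $[1,\infty)$, and for every $\alpha^0\in[1,\infty)$ the iteration $\alpha^{p+1}=\zeta_\delta(\alpha^p)$ converges to it.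
   Context: Fixed data: $A\in\mathbb{R}^{m\times n}$, $\mathbf d\in\mathbb{R}^m$, $\mu>0$. For an ensemble $\mathbf u_k=(\mathbf u_k^{(1)},\dots,\mathbf u_k^{(N)})$ of vectors in $\mathbb{R}^n$: $\bar{\mathbf u}_k=\frac1N\sum_i\mathbf u_k^{(i)}$, $C_k=\frac1N\sum_i(\mathbf u_k^{(i)}-\bar{\mathbf u}_k)(\mathbf u_k^{(i)}-\bar{\mathbf u}_k)^T$, $\bar{\mathbf r}_k=\mathbf d-A\bar{\mathbf u}_k$. $\lambda_{\max},\lambda_{\min}$ denote the largest and smallest eigenvalues of a symmetric matrix; $\|\cdot\|_2$ is the Euclidean norm. *)

theory Defs
  imports "HOL-Analysis.Analysis"
begin

text \<open>Eigenvalues of a square real matrix, and the largest/smallest one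
  (used for symmetric matrices, where the set is finite and nonempty).\<close>
definition eigvals :: "real^'m^'m \<Rightarrow> real set" where
  "eigvals S = {l. \<exists>v. v \<noteq> 0 \<and> S *v v = l *\<^sub>R v}"

definition lambda_max :: "real^'m^'m \<Rightarrow> real" where
  "lambda_max S = Max (eigvals S)"

definition lambda_min :: "real^'m^'m \<Rightarrow> real" where
  "lambda_min S = Min (eigvals S)"

definition outer :: "real^'n \<Rightarrow> real^'n \<Rightarrow> real^'n^'n" where
  "outer v w = (\<chi> i j. v $ i * w $ j)"

definition ens_mean :: "nat \<Rightarrow> (nat \<Rightarrow> real^'n) \<Rightarrow> real^'n" where
  "ens_mean N u = (1 / real N) *\<^sub>R (\<Sum>i\<in>{1..N}. u i)"

definition ens_cov :: "nat \<Rightarrow> (nat \<Rightarrow> real^'n) \<Rightarrow> real^'n^'n" where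
  "ens_cov N u = (1 / real N) *\<^sub>R
     (\<Sum>i\<in>{1..N}. outer (u i - ens_mean N u) (u i - ens_mean N u))"

end

theory Submission
  imports Defs
begin


definition symm :: "real^'m^'m \<Rightarrow> bool" where
  "symm S \<longleftrightarrow> (\<forall>x y. x \<bullet> (S *v y) = (S *v x) \<bullet> y)"

lemma disc:
  fixes a b c :: real
  assumes "\<And>t. 0 \<le> a + 2*t*b + t^2*c" and c0: "0 \<le> c"
  shows "b^2 \<le> a*c"
proof (cases "c > 0")
  case True
  have "0 \<le> a + 2*(-b/c)*b + (-b/c)^2*c" by (rule assms(1))
  also have "\<dots> = a - b^2/c" using True by (simp add: field_simps power2_eq_square)
  finally have "b^2/c \<le> a" by simp
  then show ?thesis using True by (simp add: field_simps)
next
  case False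
  have a0: "0 \<le> a" using assms(1)[of 0] by simp
  show ?thesis
  proof (cases "b = 0")
    case True then show ?thesis using a0 False c0 by simp
  next
    case bn: False
    have "0 \<le> a + 2*(-(a+1)/(2*b))*b + (-(a+1)/(2*b))^2*c" by (rule assms(1))
    moreover have "(-(a+1)/(2*b))^2*c \<le> 0" using False
      by (simp add: mult_nonneg_nonpos)
    moreover have "2*(-(a+1)/(2*b))*b = -(a+1)" using bn by (simp add: field_simps)
    ultimately show ?thesis by linarith
  qed
qed

lemma quad_expand:
  assumes "symm S"
  shows "(x + t *\<^sub>R y) \<bullet> (S *v (x + t *\<^sub>R y)) =
     x \<bullet> (S *v x) + 2*t*(x \<bullet> (S *v y)) + t^2 * (y \<bullet> (S *v y))"
proof -
  have "y \<bullet> (S *v x) = x \<bullet> (S *v y)" using assms unfolding symm_def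
    by (metis inner_commute)
  moreover have "S *v (x + t *\<^sub>R y) = S *v x + t *\<^sub>R (S *v y)"
    by (simp only: matrix_vector_right_distrib matrix_vector_mult_scaleR)
  moreover have "(x + t *\<^sub>R y) \<bullet> (S *v x + t *\<^sub>R (S *v y)) =
     x \<bullet> (S *v x) + t * (x \<bullet> (S *v y)) + t * (y \<bullet> (S *v x)) + t * t * (y \<bullet> (S *v y))"
    by (simp add: inner_add_left inner_add_right distrib_left)
  ultimately show ?thesis
    by (simp add: power2_eq_square)
qed

lemma mat_scale_vec: "((c::real) *\<^sub>R mat 1) *v (x::real^'n) = c *\<^sub>R x"
  by (simp only: scaleR_matrix_vector_assoc[symmetric] matrix_vector_mul_lid)

lemma psd_zero:
  assumes "symm B" and psd: "\<And>x. 0 \<le> x \<bullet> (B *v x)" and v0: "v \<bullet> (B *v v) = 0"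
  shows "B *v v = 0"
proof -
  have "\<And>y. (v \<bullet> (B *v y))^2 \<le> 0"
  proof -
    fix y
    have "(v \<bullet> (B *v y))^2 \<le> (v \<bullet> (B *v v)) * (y \<bullet> (B *v y))"
      by (rule disc) (metis quad_expand[OF assms(1)] psd, rule psd)
    then show "(v \<bullet> (B *v y))^2 \<le> 0" using v0 by simp
  qed
  then have "\<And>y. v \<bullet> (B *v y) = 0"
    by (metis power2_less_eq_zero_iff)
  then have "(B *v v) \<bullet> (B *v v) = 0" using assms(1) unfolding symm_def by metis
  then show ?thesis by simp
qed

lemma cs_psd:
  assumes "symm S" and psd: "\<And>x. 0 \<le> x \<bullet> (S *v x)"
  shows "(x \<bullet> (S *v y))^2 \<le> (x \<bullet> (S *v x)) * (y \<bullet> (S *v y))"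
  by (rule disc) (metis quad_expand[OF assms(1)] psd, rule psd)

lemma rayleigh_max:
  fixes S :: "real^'m^'m"
  assumes "symm S"
  shows "\<exists>R. R \<in> eigvals S \<and> (\<forall>x. x \<bullet> (S *v x) \<le> R * (x \<bullet> x))"
proof -
  have cont: "continuous_on (sphere 0 1) (\<lambda>x::real^'m. x \<bullet> (S *v x))"
    by (intro continuous_intros linear_continuous_on bounded_linear_intros
        matrix_vector_mul_bounded_linear)
  have "sphere (0::real^'m) 1 \<noteq> {}" by simp
  then obtain v where vS: "v \<in> sphere (0::real^'m) 1"
    and vmax: "\<forall>y\<in>sphere 0 1. y \<bullet> (S *v y) \<le> v \<bullet> (S *v v)"
    using continuous_attains_sup[OF compact_sphere _ cont] by blast
  define R where "R = v \<bullet> (S *v v)"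
  have nv: "norm v = 1" using vS by simp
  have vv: "v \<bullet> v = 1" using nv by (simp add: dot_square_norm)
  have bound: "x \<bullet> (S *v x) \<le> R * (x \<bullet> x)" for x
  proof (cases "x = 0")
    case True then show ?thesis by simp
  next
    case False
    let ?y = "(1/norm x) *\<^sub>R x"
    have "?y \<in> sphere 0 1" using False by simp
    then have "?y \<bullet> (S *v ?y) \<le> R" using vmax R_def by blast
    moreover have "?y \<bullet> (S *v ?y) = (x \<bullet> (S *v x)) / (x \<bullet> x)"
      by (simp add: matrix_vector_mult_scaleR dot_square_norm power2_eq_square)
    moreover have "x \<bullet> x > 0" using False by simp
    ultimately show ?thesis by (simp add: field_simps)
  qed
  define B where "B = R *\<^sub>R mat 1 - S"
  have Bv: "B *v x = R *\<^sub>R x - S *v x" for x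
    by (simp add: B_def matrix_vector_mult_diff_rdistrib mat_scale_vec)
  have symB: "symm B" using assms unfolding symm_def Bv
    by (simp add: inner_diff_left inner_diff_right inner_commute)
  have psdB: "0 \<le> x \<bullet> (B *v x)" for x
    using bound[of x] by (simp add: Bv inner_diff_right)
  have "v \<bullet> (B *v v) = 0" by (simp add: Bv inner_diff_right vv R_def)
  then have "B *v v = 0" by (rule psd_zero[OF symB psdB])
  then have "S *v v = R *\<^sub>R v" by (simp add: Bv)
  moreover have "v \<noteq> 0" using nv by auto
  ultimately have "R \<in> eigvals S" unfolding eigvals_def by blast
  then show ?thesis using bound by blast
qed

lemma eigvals_finite:
  fixes S :: "real^'m^'m"
  assumes "symm S"
  shows "finite (eigvals S)"
proof -
  define ev where "ev l = (SOME v. v \<noteq> 0 \<and> S *v v = l *\<^sub>R v)" for l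
  have evp: "ev l \<noteq> 0 \<and> S *v ev l = l *\<^sub>R ev l" if "l \<in> eigvals S" for l
  proof -
    have "\<exists>v. v \<noteq> 0 \<and> S *v v = l *\<^sub>R v" using that by (simp add: eigvals_def)
    then show ?thesis unfolding ev_def by (rule someI_ex)
  qed
  have inj: "inj_on ev (eigvals S)"
  proof (rule inj_onI)
    fix l l' assume "l \<in> eigvals S" "l' \<in> eigvals S" "ev l = ev l'"
    then have "l *\<^sub>R ev l = l' *\<^sub>R ev l" "ev l \<noteq> 0" using evp by metis+
    then show "l = l'" by (simp add: scaleR_cancel_right)
  qed
  have orth: "pairwise orthogonal (ev ` eigvals S)"
  proof (rule pairwiseI)
    fix x y assume "x \<in> ev ` eigvals S" "y \<in> ev ` eigvals S" "x \<noteq> y"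
    then obtain l l' where l: "l \<in> eigvals S" "l' \<in> eigvals S" "x = ev l" "y = ev l'"
      by blast
    with \<open>x \<noteq> y\<close> have "l \<noteq> l'" by blast
    have "l * (x \<bullet> y) = (S *v x) \<bullet> y" using evp l by simp
    also have "\<dots> = x \<bullet> (S *v y)" using assms unfolding symm_def by metis
    also have "\<dots> = l' * (x \<bullet> y)" using evp l by simp
    finally have "x \<bullet> y = 0" using \<open>l \<noteq> l'\<close> by simp
    then show "orthogonal x y" by (simp add: orthogonal_def)
  qed
  have "0 \<notin> ev ` eigvals S" using evp by auto
  then have "finite (ev ` eigvals S)"
    using pairwise_orthogonal_independent[OF orth] eucl.finiteI_independent by blast
  then show ?thesis using finite_imageD inj by blast
qed

lemma lmax_props:
  fixes S :: "real^'m^'m"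
  assumes "symm S"
  shows "lambda_max S \<in> eigvals S" "\<And>x. x \<bullet> (S *v x) \<le> lambda_max S * (x \<bullet> x)"
proof -
  obtain R where R: "R \<in> eigvals S" "\<And>x. x \<bullet> (S *v x) \<le> R * (x \<bullet> x)"
    using rayleigh_max[OF assms] by blast
  have "l \<le> R" if "l \<in> eigvals S" for l
  proof -
    have "\<exists>v. v \<noteq> 0 \<and> S *v v = l *\<^sub>R v" using that by (simp add: eigvals_def)
    then obtain v where v: "v \<noteq> 0" "S *v v = l *\<^sub>R v" by (elim exE conjE)
    have "v \<bullet> (S *v v) = l * (v \<bullet> v)" using v(2) by simp
    then have "l * (v \<bullet> v) \<le> R * (v \<bullet> v)" using R(2)[of v] by linarith
    moreover have "0 < v \<bullet> v" using v(1) by simp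
    ultimately show ?thesis by (meson mult_le_cancel_right_pos)
  qed
  then have "lambda_max S = R" unfolding lambda_max_def
    using R(1) eigvals_finite[OF assms] by (intro Max_eqI) auto
  then show "lambda_max S \<in> eigvals S" "\<And>x. x \<bullet> (S *v x) \<le> lambda_max S * (x \<bullet> x)"
    using R by auto
qed

lemma lmin_props:
  fixes S :: "real^'m^'m"
  assumes "symm S"
  shows "lambda_min S \<in> eigvals S" "\<And>x. lambda_min S * (x \<bullet> x) \<le> x \<bullet> (S *v x)"
proof -
  have negv: "(- S) *v x = - (S *v x)" for x
    by (simp add: matrix_vector_mult_def vec_eq_iff sum_negf)
  have s2: "symm (- S)" using assms unfolding symm_def negv by simp
  obtain R where R: "R \<in> eigvals (- S)" "\<And>x. x \<bullet> ((- S) *v x) \<le> R * (x \<bullet> x)"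
    using rayleigh_max[OF s2] by blast
  have R1: "- R \<in> eigvals S"
  proof -
    obtain v where v: "v \<noteq> 0" "(- S) *v v = R *\<^sub>R v" using R(1) unfolding eigvals_def by blast
    then have "- (S *v v) = R *\<^sub>R v" by (simp only: negv)
    then have "S *v v = - (R *\<^sub>R v)" by (metis minus_minus)
    then have "S *v v = (- R) *\<^sub>R v" by (simp only: scaleR_minus_left)
    then show ?thesis using v(1) unfolding eigvals_def by blast
  qed
  have R2: "- R * (x \<bullet> x) \<le> x \<bullet> (S *v x)" for x 
  proof -
    have "x \<bullet> ((- S) *v x) = - (x \<bullet> (S *v x))" unfolding negv by (rule inner_minus_right)
    then show ?thesis using R(2)[of x] by linarith
  qed
  have "- R \<le> l" if "l \<in> eigvals S" for l
  proof -
    have "\<exists>v. v \<noteq> 0 \<and> S *v v = l *\<^sub>R v" using that by (simp add: eigvals_def)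
    then obtain v where v: "v \<noteq> 0" "S *v v = l *\<^sub>R v" by (elim exE conjE)
    have "v \<bullet> (S *v v) = l * (v \<bullet> v)" using v(2) by simp
    then have "- R * (v \<bullet> v) \<le> l * (v \<bullet> v)" using R2[of v] by linarith
    moreover have "0 < v \<bullet> v" using v(1) by simp
    ultimately show ?thesis by (meson mult_le_cancel_right_pos)
  qed
  then have Leq: "lambda_min S = - R" unfolding lambda_min_def
    using R1 eigvals_finite[OF assms] by (intro Min_eqI) blast+
  show "lambda_min S \<in> eigvals S" unfolding Leq by (rule R1)
  show "\<And>x. lambda_min S * (x \<bullet> x) \<le> x \<bullet> (S *v x)"
    unfolding Leq by (rule R2)
qed



lemma matrix_inv_props:
  fixes A :: "real^'m^'m"
  assumes "invertible A"
  shows "A ** matrix_inv A = mat 1" "matrix_inv A ** A = mat 1"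
proof -
  have "\<exists>A'. A ** A' = mat 1 \<and> A' ** A = mat 1" using assms by (simp add: invertible_def)
  then have "A ** matrix_inv A = mat 1 \<and> matrix_inv A ** A = mat 1"
    unfolding matrix_inv_def by (rule someI_ex)
  then show "A ** matrix_inv A = mat 1" "matrix_inv A ** A = mat 1" by auto
qed

context
  fixes S :: "real^'m^'m" and \<mu> c0 :: real
  assumes symS: "symm S" and psd: "\<And>x. 0 \<le> x \<bullet> (S *v x)" and mu: "\<mu> > 0"
    and c0: "\<And>x. c0 * (x \<bullet> x) \<le> x \<bullet> (S *v x)" and c0pos: "c0 \<ge> 0"
begin

definition Mm :: "real \<Rightarrow> real^'m^'m" where
  "Mm \<gamma> = \<mu> *\<^sub>R mat 1 + \<gamma> *\<^sub>R S"

definition NN :: "real \<Rightarrow> real^'m^'m" where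
  "NN \<gamma> = matrix_inv (Mm \<gamma>)"

lemma Mv: "Mm \<gamma> *v x = \<mu> *\<^sub>R x + \<gamma> *\<^sub>R (S *v x)"
  unfolding Mm_def
  by (simp only: matrix_vector_mult_add_rdistrib scaleR_matrix_vector_assoc[symmetric] matrix_vector_mul_lid)

lemma Msym: "a \<bullet> (Mm \<gamma> *v b) = (Mm \<gamma> *v a) \<bullet> b"
  using symS unfolding Mv symm_def
  by (simp add: inner_add_left inner_add_right inner_commute)

lemma Mpos: "\<gamma> \<ge> 0 \<Longrightarrow> (\<mu> + \<gamma> * c0) * (x \<bullet> x) \<le> x \<bullet> (Mm \<gamma> *v x)"
proof -
  assume g: "\<gamma> \<ge> 0"
  have "\<gamma> * (c0 * (x \<bullet> x)) \<le> \<gamma> * (x \<bullet> (S *v x))" using c0[of x] g by (rule mult_left_mono)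
  then show ?thesis unfolding Mv by (simp add: inner_add_right algebra_simps)
qed

lemma cpos: "\<gamma> \<ge> 0 \<Longrightarrow> \<mu> + \<gamma> * c0 > 0"
  using mu c0pos by (simp add: add_pos_nonneg)

lemma Minv: "\<gamma> \<ge> 0 \<Longrightarrow> invertible (Mm \<gamma>)"
proof -
  assume g: "\<gamma> \<ge> 0"
  have "\<forall>x. Mm \<gamma> *v x = 0 \<longrightarrow> x = 0"
  proof (intro allI impI)
    fix x assume "Mm \<gamma> *v x = 0"
    then have "(\<mu> + \<gamma> * c0) * (x \<bullet> x) \<le> 0" using Mpos[OF g, of x] by simp
    then have "x \<bullet> x \<le> 0" using cpos[OF g] by (simp add: mult_le_0_iff)
    then have "x \<bullet> x = 0" using inner_ge_zero[of x] by linarith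
    then show "x = 0" by simp
  qed
  then show ?thesis unfolding invertible_left_inverse matrix_left_invertible_ker .
qed

lemma MN: "\<gamma> \<ge> 0 \<Longrightarrow> Mm \<gamma> *v (NN \<gamma> *v y) = y"
  unfolding NN_def by (simp add: matrix_vector_mul_assoc matrix_inv_props(1)[OF Minv])

lemma NM: "\<gamma> \<ge> 0 \<Longrightarrow> NN \<gamma> *v (Mm \<gamma> *v y) = y"
  unfolding NN_def by (simp add: matrix_vector_mul_assoc matrix_inv_props(2)[OF Minv])

lemma Nsym: "\<gamma> \<ge> 0 \<Longrightarrow> a \<bullet> (NN \<gamma> *v b) = (NN \<gamma> *v a) \<bullet> b"
proof -
  assume g: "\<gamma> \<ge> 0"
  have "a \<bullet> (NN \<gamma> *v b) = (Mm \<gamma> *v (NN \<gamma> *v a)) \<bullet> (NN \<gamma> *v b)" by (simp add: MN[OF g])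
  also have "\<dots> = (NN \<gamma> *v a) \<bullet> (Mm \<gamma> *v (NN \<gamma> *v b))" by (simp add: Msym)
  also have "\<dots> = (NN \<gamma> *v a) \<bullet> b" by (simp add: MN[OF g])
  finally show ?thesis .
qed

lemma Nquad: "\<gamma> \<ge> 0 \<Longrightarrow> 0 \<le> y \<bullet> (NN \<gamma> *v y) \<and> y \<bullet> (NN \<gamma> *v y) \<le> (y \<bullet> y) / (\<mu> + \<gamma> * c0)
    \<and> norm (NN \<gamma> *v y) \<le> norm y / (\<mu> + \<gamma> * c0)"
proof -
  assume g: "\<gamma> \<ge> 0"
  define x where "x = NN \<gamma> *v y"
  define c where "c = \<mu> + \<gamma> * c0"
  have c: "c > 0" using cpos[OF g] c_def by simp
  have yx: "y \<bullet> x = x \<bullet> (Mm \<gamma> *v x)" unfolding x_def by (simp add: MN[OF g] inner_commute)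
  have lb: "c * (x \<bullet> x) \<le> y \<bullet> x" using Mpos[OF g, of x] yx c_def by simp
  have cs: "y \<bullet> x \<le> norm y * norm x" using norm_cauchy_schwarz by blast
  have xx: "x \<bullet> x = norm x ^ 2" by (simp add: dot_square_norm)
  have nx: "norm x \<le> norm y / c"
  proof (cases "norm x = 0")
    case True then show ?thesis using c by simp
  next
    case False
    have "c * norm x * norm x \<le> norm y * norm x" using lb cs xx by (simp add: power2_eq_square algebra_simps)
    then have "c * norm x \<le> norm y" using False by (simp add: mult_le_cancel_right)
    then show ?thesis using c by (simp add: field_simps)
  qed
  have "0 \<le> y \<bullet> x" using lb c by (metis inner_ge_zero mult_nonneg_nonneg less_imp_le order_trans)
  moreover have "y \<bullet> x \<le> (y \<bullet> y) / c"
  proof -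
    have "norm y * norm x \<le> norm y * (norm y / c)" by (rule mult_left_mono[OF nx norm_ge_zero])
    also have "\<dots> = (y \<bullet> y) / c" by (simp add: dot_square_norm power2_eq_square)
    finally show ?thesis using cs by linarith
  qed
  ultimately show ?thesis using nx unfolding x_def c_def by simp
qed

lemma Nnorm_mu: "\<gamma> \<ge> 0 \<Longrightarrow> norm (NN \<gamma> *v y) \<le> norm y / \<mu>"
proof -
  assume g: "\<gamma> \<ge> 0"
  have "norm (NN \<gamma> *v y) \<le> norm y / (\<mu> + \<gamma> * c0)" using Nquad[OF g] by blast
  also have "\<dots> \<le> norm y / \<mu>" using mu g c0pos cpos[OF g] by (intro divide_left_mono) auto
  finally show ?thesis .
qed

lemma resolvent:
  assumes a: "\<alpha> \<ge> 0" and b: "\<beta> \<ge> 0"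
  shows "NN \<alpha> *v y - NN \<beta> *v y = (\<beta> - \<alpha>) *\<^sub>R (NN \<beta> *v (S *v (NN \<alpha> *v y)))"
proof -
  define x where "x = NN \<alpha> *v y"
  have "Mm \<beta> *v x = Mm \<alpha> *v x + (\<beta> - \<alpha>) *\<^sub>R (S *v x)"
    unfolding Mv by (simp add: algebra_simps)
  also have "\<dots> = y + (\<beta> - \<alpha>) *\<^sub>R (S *v x)" unfolding x_def by (simp add: MN[OF a])
  finally have "NN \<beta> *v (Mm \<beta> *v x) = NN \<beta> *v y + (\<beta> - \<alpha>) *\<^sub>R (NN \<beta> *v (S *v x))"
    by (simp add: matrix_vector_right_distrib matrix_vector_mult_scaleR)
  then have "x = NN \<beta> *v y + (\<beta> - \<alpha>) *\<^sub>R (NN \<beta> *v (S *v x))" by (simp add: NM[OF b])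
  then show ?thesis unfolding x_def by (simp add: algebra_simps)
qed

lemma Wderiv:
  assumes a: "\<alpha> > 0"
  shows "((\<lambda>\<gamma>. NN \<gamma> *v r) has_derivative (\<lambda>h. h *\<^sub>R (- (NN \<alpha> *v (S *v (NN \<alpha> *v r)))))) (at \<alpha>)"
proof -
  define z where "z = S *v (NN \<alpha> *v r)"
  define K where "K = norm (S *v (NN \<alpha> *v z)) / \<mu>"
  define v where "v = - (NN \<alpha> *v z)"
  have K0: "K \<ge> 0" unfolding K_def using mu by simp
  have key: "norm (NN (\<alpha>+h) *v r - NN \<alpha> *v r - h *\<^sub>R v) \<le> h^2 * K" if h: "\<alpha> + h \<ge> 0" for h
  proof -
    have e1: "NN \<alpha> *v r - NN (\<alpha>+h) *v r = h *\<^sub>R (NN (\<alpha>+h) *v z)"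
      using resolvent[OF less_imp_le[OF a] h, of r] unfolding z_def by simp
    have e2: "NN \<alpha> *v z - NN (\<alpha>+h) *v z = h *\<^sub>R (NN (\<alpha>+h) *v (S *v (NN \<alpha> *v z)))"
      using resolvent[OF less_imp_le[OF a] h, of z] by simp
    have "NN (\<alpha>+h) *v r - NN \<alpha> *v r - h *\<^sub>R v = h *\<^sub>R (NN \<alpha> *v z - NN (\<alpha>+h) *v z)"
    proof -
      have "NN (\<alpha>+h) *v r - NN \<alpha> *v r = - (h *\<^sub>R (NN (\<alpha>+h) *v z))" using e1 by (simp add: algebra_simps)
      then show ?thesis unfolding v_def by (simp add: algebra_simps)
    qed
    also have "\<dots> = h *\<^sub>R (h *\<^sub>R (NN (\<alpha>+h) *v (S *v (NN \<alpha> *v z))))" using e2 by simp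
    finally have "norm (NN (\<alpha>+h) *v r - NN \<alpha> *v r - h *\<^sub>R v)
        = \<bar>h\<bar> * (\<bar>h\<bar> * norm (NN (\<alpha>+h) *v (S *v (NN \<alpha> *v z))))" by simp
    also have "\<dots> \<le> \<bar>h\<bar> * (\<bar>h\<bar> * K)" unfolding K_def
      using Nnorm_mu[OF h] by (intro mult_left_mono) auto
    also have "\<dots> = h^2 * K" by (simp add: power2_eq_square abs_mult_self_eq)
    finally show ?thesis .
  qed
  have ev0: "\<forall>\<^sub>F h in at (0::real). \<bar>h\<bar> < \<alpha>"
    unfolding eventually_at by (rule exI[of _ \<alpha>]) (auto simp: a dist_real_def)
  have ev: "\<forall>\<^sub>F h in at (0::real). norm (norm (NN (\<alpha>+h) *v r - NN \<alpha> *v r - h *\<^sub>R v) / norm h) \<le> K * \<bar>h\<bar>"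
    using ev0
  proof eventually_elim
    case (elim h)
    then have h: "\<alpha> + h \<ge> 0" by linarith
    show ?case
    proof (cases "h = 0")
      case True then show ?thesis using K0 by simp
    next
      case False
      have "norm (NN (\<alpha>+h) *v r - NN \<alpha> *v r - h *\<^sub>R v) / \<bar>h\<bar> \<le> h^2 * K / \<bar>h\<bar>"
        using key[OF h] False by (intro divide_right_mono) auto
      also have "\<dots> = K * \<bar>h\<bar>" using False by (simp add: power2_eq_square field_simps abs_mult_self_eq)
      finally show ?thesis by simp
    qed
  qed
  have lim: "((\<lambda>h. K * \<bar>h\<bar>) \<longlongrightarrow> 0) (at (0::real))"
  proof -
    have "((\<lambda>h. K * \<bar>h\<bar>) \<longlongrightarrow> K * \<bar>0\<bar>) (at (0::real))" by (intro tendsto_intros)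
    then show ?thesis by simp
  qed
  have "(\<lambda>h. norm (NN (\<alpha>+h) *v r - NN \<alpha> *v r - h *\<^sub>R v) / norm h) \<midarrow>0\<rightarrow> 0"
    by (rule Lim_null_comparison[OF ev lim])
  then have "((\<lambda>\<gamma>. NN \<gamma> *v r) has_derivative (\<lambda>h. h *\<^sub>R v)) (at \<alpha>)"
    unfolding has_derivative_at using bounded_linear_scaleR_left by simp
  then show ?thesis unfolding v_def z_def .
qed

end


lemma sum_mv: "finite I \<Longrightarrow> (sum f I) *v (y::real^'n) = sum (\<lambda>i. f i *v y) I"
  by (induct rule: finite_induct) (simp_all add: matrix_vector_mult_add_rdistrib)

lemma outer_mv: "outer v w *v (y::real^'n) = (w \<bullet> y) *\<^sub>R v"
  by (simp add: vec_eq_iff outer_def matrix_vector_mult_def inner_vec_def sum_distrib_left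
      algebra_simps)

lemma cov_form:
  "a \<bullet> (ens_cov N u *v b) =
     (1 / real N) * (\<Sum>i\<in>{1..N}. ((u i - ens_mean N u) \<bullet> b) * (a \<bullet> (u i - ens_mean N u)))"
  unfolding ens_cov_def
  by (simp add: scaleR_matrix_vector_assoc[symmetric] sum_mv outer_mv inner_sum_right)

lemma transp_inner: "x \<bullet> ((A::real^'n^'m) *v w) = (transpose A *v x) \<bullet> w"
  by (simp add: dot_lmul_matrix)

lemma S_form:
  fixes A :: "real^'n^'m"
  shows "x \<bullet> ((A ** C ** transpose A) *v y) = (transpose A *v x) \<bullet> (C *v (transpose A *v y))"
  by (simp add: matrix_vector_mul_assoc[symmetric] transp_inner)

lemma norm_S_bound:
  fixes S :: "real^'m^'m"
  assumes "symm S" and psd: "\<And>x. 0 \<le> x \<bullet> (S *v x)" and L: "\<And>x. x \<bullet> (S *v x) \<le> L * (x \<bullet> x)"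
  shows "norm (S *v x) \<le> L * norm x"
proof (cases "x = 0")
  case True then show ?thesis by simp
next
  case False
  define y where "y = S *v x"
  have L0: "L \<ge> 0"
  proof -
    have "0 \<le> L * (x \<bullet> x)" using psd[of x] L[of x] by linarith
    moreover have "x \<bullet> x > 0" using False by simp
    ultimately show ?thesis by (simp add: zero_le_mult_iff)
  qed
  have a: "x \<bullet> (S *v y) = y \<bullet> y" using assms(1) unfolding symm_def y_def by metis
  define p where "p = y \<bullet> y"
  define qx where "qx = x \<bullet> (S *v x)"
  define qy where "qy = y \<bullet> (S *v y)"
  define xx where "xx = x \<bullet> x"
  have "p^2 \<le> qx * qy"
    using cs_psd[OF assms(1) psd, of x y] a unfolding p_def qx_def qy_def by simp
  also have "\<dots> \<le> (L * xx) * (L * p)" unfolding qx_def qy_def xx_def p_def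
    by (rule mult_mono[OF L[of x] L[of y] mult_nonneg_nonneg[OF L0 inner_ge_zero] psd[of y]])
  finally have b: "p * p \<le> (L^2 * xx) * p"
    by (simp add: power2_eq_square mult_ac)
  have "p \<le> L^2 * xx"
  proof (cases "p = 0")
    case True then show ?thesis unfolding xx_def by simp
  next
    case False
    then have "p > 0" using inner_ge_zero[of y] unfolding p_def by linarith
    then show ?thesis using b by (simp add: mult_le_cancel_right)
  qed
  then have "y \<bullet> y \<le> L^2 * (x \<bullet> x)" unfolding p_def xx_def .
  then have "(norm y)^2 \<le> (L * norm x)^2"
    by (simp add: dot_square_norm power_mult_distrib)
  then have "norm y \<le> L * norm x" by (rule power2_le_imp_le) (simp add: L0)
  then show ?thesis by (simp only: y_def)
qed



lemma cov_form2:
  "a \<bullet> (ens_cov N u *v b) =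
     (1 / real N) * (\<Sum>i\<in>{1..N}. ((u i - ens_mean N u) \<bullet> a) * ((u i - ens_mean N u) \<bullet> b))"
  by (simp add: cov_form inner_commute[of a] mult.commute)

lemma real_bound1:
  fixes c c1 Lm nr f t g :: real
  assumes c1: "c1 > 0" "c1 \<le> c" and Lm: "0 \<le> Lm" and nr: "0 \<le> nr"
    and f: "0 \<le> f" "f \<le> nr^2 / c" and t: "0 \<le> t" "t \<le> (Lm * nr / c)^2 / c"
    and g: "0 \<le> g" "g \<le> Lm * (nr / c)^2"
  shows "\<bar>- (2 * f * t) - g^2\<bar> \<le> 3 * (Lm^2 * nr^4 / c1^4)"
proof -
  have c: "c > 0" using c1 by linarith
  have "2 * f * t \<le> 2 * ((nr^2 / c) * ((Lm * nr / c)^2 / c))"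
    using mult_mono[OF f(2) t(2) _ t(1)] c by simp
  moreover have "g^2 \<le> (Lm * (nr / c)^2)^2" using power_mono[OF g(2) g(1)] .
  moreover have "2 * ((nr^2 / c) * ((Lm * nr / c)^2 / c)) + (Lm * (nr / c)^2)^2 = 3 * (Lm^2 * nr^4 / c^4)"
    using c by (simp add: field_simps power2_eq_square power4_eq_xxxx)
  moreover have "Lm^2 * nr^4 / c^4 \<le> Lm^2 * nr^4 / c1^4"
    using c1 by (intro divide_left_mono mult_nonneg_nonneg power_mono) (auto simp: Lm nr)
  moreover have "0 \<le> 2 * f * t" using f t by simp
  moreover have "0 \<le> g^2" by simp
  ultimately show ?thesis by linarith
qed

lemma real_bound2:
  fixes q e X D dl :: real
  assumes "q > 0" "e > 0" "X \<ge> 0" "\<bar>D\<bar> \<le> 3 * X" "dl = 3 / (4 * q) * X + e"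
  shows "\<bar>D / (4 * dl)\<bar> \<le> q"
proof -
  have dl: "dl > 0" using assms by (simp add: add_nonneg_pos)
  have "\<bar>D / (4 * dl)\<bar> = \<bar>D\<bar> / (4 * dl)" using dl by (simp add: abs_divide)
  also have "\<dots> \<le> 3 * X / (4 * dl)" using assms(4) dl by (intro divide_right_mono) auto
  also have "\<dots> \<le> q"
  proof -
    have "3 * X \<le> q * (4 * dl)" using assms by (simp add: field_simps)
    then show ?thesis using dl by (simp add: divide_le_eq)
  qed
  finally show ?thesis .
qed

theorem proposition4:
  fixes A :: "real^'n^'m" and d :: "real^'m" and \<mu> :: real
    and N :: nat and u :: "nat \<Rightarrow> real^'n"
    and k :: nat and q :: real and \<epsilon>\<delta> :: real
    and C :: "real^'n^'n" and rbar :: "real^'m" and \<delta> :: real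
    and M :: "real \<Rightarrow> real^'m^'m" and \<zeta> :: "real \<Rightarrow> real"
  assumes "\<mu> > 0" and "N \<ge> 1" and "k \<ge> 1"
    and "0 < q" and "q < 1" and "\<epsilon>\<delta> > 0"
    and C_def: "C = ens_cov N u"
    and r_def: "rbar = d - A *v ens_mean N u"
    and delta_def: "\<delta> = 3 / (4 * q) * (lambda_max (A ** C ** transpose A))\<^sup>2
        * norm rbar ^ 4 / (\<mu> + lambda_min (A ** C ** transpose A)) ^ 4
        + \<epsilon>\<delta> * real k"
    and M_def: "\<And>\<alpha>. M \<alpha> = \<mu> *\<^sub>R mat 1 + \<alpha> *\<^sub>R (A ** C ** transpose A)"
    and zeta_def: "\<And>\<alpha>. \<zeta> \<alpha> = 1 +
        (rbar \<bullet> (matrix_inv (M \<alpha>) *v rbar)) *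
        (rbar \<bullet> ((matrix_inv (M \<alpha>) ** A ** C ** transpose A ** matrix_inv (M \<alpha>)) *v rbar))
        / (4 * \<delta>)"
  shows "\<zeta> ` {1..} \<subseteq> {1..}
    \<and> (\<forall>\<alpha>\<ge>1. \<exists>D. (\<zeta> has_real_derivative D) (at \<alpha>) \<and> \<bar>D\<bar> \<le> q)
    \<and> (\<exists>!\<alpha>. \<alpha> \<ge> 1 \<and> \<zeta> \<alpha> = \<alpha>)
    \<and> (\<forall>\<alpha>0 \<alpha>. \<alpha>0 \<ge> 1 \<and> \<alpha> \<ge> 1 \<and> \<zeta> \<alpha> = \<alpha> \<longrightarrow>
           (\<lambda>p. (\<zeta> ^^ p) \<alpha>0) \<longlonglongrightarrow> \<alpha>)"
proof -
  note mu = \<open>\<mu> > 0\<close>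
  define S where "S = A ** C ** transpose A"
  have Sform: "x \<bullet> (S *v y) = (transpose A *v x) \<bullet> (C *v (transpose A *v y))" for x y
    unfolding S_def by (rule S_form)
  have Csym: "a \<bullet> (C *v b) = b \<bullet> (C *v a)" for a b
    unfolding C_def cov_form2 by (simp add: mult.commute)
  have Cpsd: "0 \<le> a \<bullet> (C *v a)" for a
    unfolding C_def cov_form2 by (rule mult_nonneg_nonneg) (simp_all add: sum_nonneg)
  have symS: "symm S" unfolding symm_def
  proof (intro allI)
    fix x y
    have "x \<bullet> (S *v y) = y \<bullet> (S *v x)" unfolding Sform using Csym by simp
    then show "x \<bullet> (S *v y) = (S *v x) \<bullet> y" by (simp only: inner_commute[of y])
  qed
  have psdS: "0 \<le> x \<bullet> (S *v x)" for x unfolding Sform by (rule Cpsd)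
  define Lm where "Lm = lambda_max S"
  define lm where "lm = lambda_min S"
  have lmax: "x \<bullet> (S *v x) \<le> Lm * (x \<bullet> x)" for x unfolding Lm_def by (rule lmax_props(2)[OF symS])
  have lmin: "lm * (x \<bullet> x) \<le> x \<bullet> (S *v x)" for x unfolding lm_def by (rule lmin_props(2)[OF symS])
  obtain v where v: "v \<noteq> 0" "S *v v = lm *\<^sub>R v"
  proof -
    have "lm \<in> eigvals S" unfolding lm_def by (rule lmin_props(1)[OF symS])
    then have "\<exists>v. v \<noteq> 0 \<and> S *v v = lm *\<^sub>R v" by (simp add: eigvals_def)
    then show ?thesis using that by blast
  qed
  have vv: "v \<bullet> v > 0" using v(1) by simp
  have lm0: "lm \<ge> 0"
  proof -
    have "v \<bullet> (S *v v) = lm * (v \<bullet> v)" using v(2) by simp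
    then have "0 \<le> lm * (v \<bullet> v)" using psdS[of v] by linarith
    then show ?thesis using vv by (simp add: zero_le_mult_iff)
  qed
  have Lm0: "Lm \<ge> 0"
  proof -
    have "0 \<le> Lm * (v \<bullet> v)" using psdS[of v] lmax[of v] by linarith
    then show ?thesis using vv by (simp add: zero_le_mult_iff)
  qed
  have normS: "norm (S *v x) \<le> Lm * norm x" for x by (rule norm_S_bound[OF symS psdS lmax])
  note ctx = symS psdS mu lmin lm0
  have Meq: "matrix_inv (M \<gamma>) = NN S \<mu> \<gamma>" for \<gamma>
    unfolding NN_def[OF ctx] Mm_def[OF ctx] unfolding M_def S_def by (rule refl)
  define W where "W = (\<lambda>\<gamma>. NN S \<mu> \<gamma> *v rbar)"
  define f where "f = (\<lambda>\<gamma>. rbar \<bullet> W \<gamma>)"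
  define g where "g = (\<lambda>\<gamma>. W \<gamma> \<bullet> (S *v W \<gamma>))"
  have zeta_eq: "\<zeta> \<gamma> = 1 + f \<gamma> * g \<gamma> / (4 * \<delta>)" if g0: "\<gamma> \<ge> 0" for \<gamma>
  proof -
    have "(NN S \<mu> \<gamma> ** A ** C ** transpose A ** NN S \<mu> \<gamma>) *v rbar = NN S \<mu> \<gamma> *v (S *v W \<gamma>)"
      unfolding S_def W_def by (simp add: matrix_mul_assoc matrix_vector_mul_assoc)
    then have "rbar \<bullet> ((NN S \<mu> \<gamma> ** A ** C ** transpose A ** NN S \<mu> \<gamma>) *v rbar) = g \<gamma>"
      unfolding g_def using Nsym[OF ctx g0, of rbar "S *v W \<gamma>"] W_def by simp
    then show ?thesis unfolding zeta_def Meq f_def W_def by simp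
  qed
  define X where "X = Lm^2 * norm rbar ^ 4 / (\<mu> + lm)^4"
  have X0: "X \<ge> 0" unfolding X_def by simp
  have dl: "\<delta> = 3 / (4 * q) * X + \<epsilon>\<delta> * real k"
    unfolding delta_def X_def Lm_def lm_def S_def by simp
  have ek: "\<epsilon>\<delta> * real k > 0" using \<open>\<epsilon>\<delta> > 0\<close> \<open>k \<ge> 1\<close> by simp
  have dpos: "\<delta> > 0" unfolding dl using \<open>q > 0\<close> X0 ek by (simp add: add_nonneg_pos)
  have f0: "f \<gamma> \<ge> 0" if "\<gamma> \<ge> 0" for \<gamma>
    unfolding f_def W_def using Nquad[OF ctx that, of rbar] by blast
  have g0: "g \<gamma> \<ge> 0" for \<gamma> unfolding g_def by (rule psdS)
  have part1: "\<zeta> ` {1..} \<subseteq> {1..}"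
  proof
    fix y assume "y \<in> \<zeta> ` {1..}"
    then obtain x where x: "x \<ge> 1" "y = \<zeta> x" by auto
    have "0 \<le> f x * g x / (4 * \<delta>)" using f0[of x] g0[of x] x dpos by simp
    then show "y \<in> {1..}" using zeta_eq[of x] x by simp
  qed
  have part2: "\<exists>D. (\<zeta> has_real_derivative D) (at \<alpha>) \<and> \<bar>D\<bar> \<le> q" if a1: "\<alpha> \<ge> 1" for \<alpha>
  proof -
    have a0: "\<alpha> > 0" "\<alpha> \<ge> 0" using a1 by auto
    define W' where "W' = - (NN S \<mu> \<alpha> *v (S *v W \<alpha>))"
    have dW: "(W has_derivative (\<lambda>h. h *\<^sub>R W')) (at \<alpha>)"
      using Wderiv[OF ctx a0(1), of rbar] unfolding W_def W'_def .
    have df: "(f has_derivative (\<lambda>h. rbar \<bullet> (h *\<^sub>R W'))) (at \<alpha>)"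
      unfolding f_def by (rule has_derivative_inner_right[OF dW])
    have dSW: "((\<lambda>\<gamma>. S *v W \<gamma>) has_derivative (\<lambda>h. S *v (h *\<^sub>R W'))) (at \<alpha>)"
      by (rule bounded_linear.has_derivative[OF matrix_vector_mul_bounded_linear dW])
    have dg: "(g has_derivative (\<lambda>h. W \<alpha> \<bullet> (S *v (h *\<^sub>R W')) + (h *\<^sub>R W') \<bullet> (S *v W \<alpha>))) (at \<alpha>)"
      unfolding g_def by (rule has_derivative_inner[OF dW dSW])
    have dfg0: "((\<lambda>\<gamma>. f \<gamma> * g \<gamma>) has_derivative
        (\<lambda>h. f \<alpha> * (W \<alpha> \<bullet> (S *v (h *\<^sub>R W')) + (h *\<^sub>R W') \<bullet> (S *v W \<alpha>)) + rbar \<bullet> (h *\<^sub>R W') * g \<alpha>)) (at \<alpha>)"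
      by (rule has_derivative_mult[OF df dg])
    define Dfg where "Dfg = f \<alpha> * (W \<alpha> \<bullet> (S *v W') + W' \<bullet> (S *v W \<alpha>)) + (rbar \<bullet> W') * g \<alpha>"
    have "(\<lambda>h. f \<alpha> * (W \<alpha> \<bullet> (S *v (h *\<^sub>R W')) + (h *\<^sub>R W') \<bullet> (S *v W \<alpha>)) + rbar \<bullet> (h *\<^sub>R W') * g \<alpha>)
        = (*) Dfg"
    proof
      fix h
      show "f \<alpha> * (W \<alpha> \<bullet> (S *v (h *\<^sub>R W')) + (h *\<^sub>R W') \<bullet> (S *v W \<alpha>)) + rbar \<bullet> (h *\<^sub>R W') * g \<alpha> = Dfg * h"
        unfolding Dfg_def by (simp add: matrix_vector_mult_scaleR distrib_left distrib_right mult_ac)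
    qed
    then have dF: "((\<lambda>\<gamma>. f \<gamma> * g \<gamma>) has_field_derivative Dfg) (at \<alpha>)"
      unfolding has_field_derivative_def using dfg0 by simp
    have dZ0: "((\<lambda>\<gamma>. 1 + f \<gamma> * g \<gamma> / (4 * \<delta>)) has_field_derivative Dfg / (4 * \<delta>)) (at \<alpha>)"
    proof -
      have D1: "((\<lambda>\<gamma>. f \<gamma> * g \<gamma> / (4 * \<delta>)) has_field_derivative Dfg / (4 * \<delta>)) (at \<alpha>)"
        using DERIV_cdivide[OF dF, of "4 * \<delta>"] .
      have "((\<lambda>\<gamma>. 1 + f \<gamma> * g \<gamma> / (4 * \<delta>)) has_field_derivative 0 + Dfg / (4 * \<delta>)) (at \<alpha>)"
        by (rule DERIV_add[OF DERIV_const D1])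
      then show ?thesis by simp
    qed
    have dZ: "(\<zeta> has_field_derivative Dfg / (4 * \<delta>)) (at \<alpha>)"
      by (rule has_field_derivative_transform_within_open[OF dZ0 open_greaterThan, of 0])
         (use a0 zeta_eq in auto)
    define z where "z = S *v W \<alpha>"
    define t where "t = z \<bullet> (NN S \<mu> \<alpha> *v z)"
    define c where "c = \<mu> + \<alpha> * lm"
    define nr where "nr = norm rbar"
    have c1: "\<mu> + lm > 0" "\<mu> + lm \<le> c" unfolding c_def using mu lm0 a1
      by (auto simp: add_pos_nonneg mult_le_cancel_right1 intro: mult_right_mono[of 1 \<alpha> lm, simplified])
    have cpos: "c > 0" using c1 by linarith
    have e1: "W \<alpha> \<bullet> (S *v W') = - t"
    proof -
      have "W \<alpha> \<bullet> (S *v W') = (S *v W \<alpha>) \<bullet> W'" using symS unfolding symm_def by metis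
      then show ?thesis unfolding t_def W'_def z_def by simp
    qed
    have e2: "W' \<bullet> (S *v W \<alpha>) = - t"
      unfolding t_def W'_def z_def by (simp add: inner_commute)
    have e3: "rbar \<bullet> W' = - g \<alpha>"
    proof -
      have "rbar \<bullet> (NN S \<mu> \<alpha> *v z) = (NN S \<mu> \<alpha> *v rbar) \<bullet> z" by (rule Nsym[OF ctx a0(2)])
      then show ?thesis unfolding W'_def g_def z_def W_def by simp
    qed
    have Dfg_eq: "Dfg = - (2 * f \<alpha> * t) - (g \<alpha>)^2"
      unfolding Dfg_def e1 e2 e3 by (simp add: power2_eq_square)
    have NqW: "norm (W \<alpha>) \<le> nr / c" unfolding W_def nr_def c_def using Nquad[OF ctx a0(2), of rbar] by blast
    have fb: "f \<alpha> \<le> nr^2 / c" unfolding f_def W_def nr_def c_def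
      using Nquad[OF ctx a0(2), of rbar] by (simp add: dot_square_norm)
    have gb: "g \<alpha> \<le> Lm * (nr / c)^2"
    proof -
      have "g \<alpha> \<le> Lm * (W \<alpha> \<bullet> W \<alpha>)" unfolding g_def by (rule lmax)
      also have "\<dots> = Lm * (norm (W \<alpha>))^2" by (simp add: dot_square_norm)
      also have "\<dots> \<le> Lm * (nr / c)^2"
        using NqW Lm0 by (intro mult_left_mono power_mono) auto
      finally show ?thesis .
    qed
    have zb: "norm z \<le> Lm * nr / c"
    proof -
      have "norm z \<le> Lm * norm (W \<alpha>)" unfolding z_def by (rule normS)
      also have "\<dots> \<le> Lm * (nr / c)" using NqW Lm0 by (intro mult_left_mono) auto
      finally show ?thesis by simp
    qed
    have t0: "0 \<le> t" unfolding t_def using Nquad[OF ctx a0(2), of z] by blast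
    have tb: "t \<le> (Lm * nr / c)^2 / c"
    proof -
      have "t \<le> (z \<bullet> z) / c" unfolding t_def c_def using Nquad[OF ctx a0(2), of z] by blast
      also have "\<dots> = (norm z)^2 / c" by (simp add: dot_square_norm)
      also have "\<dots> \<le> (Lm * nr / c)^2 / c"
        using zb cpos by (intro divide_right_mono power_mono) auto
      finally show ?thesis .
    qed
    have "\<bar>Dfg\<bar> \<le> 3 * (Lm^2 * nr^4 / (\<mu> + lm)^4)"
      unfolding Dfg_eq
      by (rule real_bound1[OF c1 Lm0 norm_ge_zero[of rbar, folded nr_def] f0[OF a0(2)] fb t0 tb g0 gb])
    then have "\<bar>Dfg\<bar> \<le> 3 * X" unfolding X_def nr_def .
    then have "\<bar>Dfg / (4 * \<delta>)\<bar> \<le> q"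
      by (rule real_bound2[OF \<open>q > 0\<close> ek X0 _ dl])
    then show ?thesis using dZ by blast
  qed
  obtain Df where Df: "\<And>\<alpha>. \<alpha> \<ge> 1 \<Longrightarrow> (\<zeta> has_real_derivative Df \<alpha>) (at \<alpha>) \<and> \<bar>Df \<alpha>\<bar> \<le> q"
    using part2 by metis
  have lip: "dist (\<zeta> x) (\<zeta> y) \<le> q * dist x y" if x: "x \<in> {1..}" and y: "y \<in> {1..}" for x y
  proof -
    have gen: "\<bar>\<zeta> b - \<zeta> a\<bar> \<le> q * (b - a)" if ab: "1 \<le> a" "a < b" for a b
    proof -
      obtain z where z: "a < z" "z < b" "\<zeta> b - \<zeta> a = (b - a) * Df z"
        using MVT2[OF ab(2), of \<zeta> Df] Df ab by force
      have "\<bar>\<zeta> b - \<zeta> a\<bar> = (b - a) * \<bar>Df z\<bar>" using z ab by (simp add: abs_mult)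
      also have "\<dots> \<le> (b - a) * q" using Df[of z] z ab by (intro mult_left_mono) auto
      finally show ?thesis by (simp add: mult.commute)
    qed
    consider "x < y" | "x = y" | "y < x" by linarith
    then show ?thesis
    proof cases
      case 1 then show ?thesis using gen[of x y] x by (simp add: dist_real_def abs_minus_commute)
    next
      case 2 then show ?thesis by simp
    next
      case 3 then show ?thesis using gen[of y x] y by (simp add: dist_real_def)
    qed
  qed
  have part3: "\<exists>!\<alpha>. \<alpha> \<ge> 1 \<and> \<zeta> \<alpha> = \<alpha>"
  proof -
    have "\<exists>!x. x \<in> {1::real..} \<and> \<zeta> x = x"
      by (rule Banach_fix[where c = q])
         (use part1 lip \<open>q > 0\<close> \<open>q < 1\<close> in \<open>auto simp: complete_eq_closed\<close>)
    then show ?thesis by simp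
  qed
  have part4: "(\<lambda>p. (\<zeta> ^^ p) \<alpha>0) \<longlonglongrightarrow> \<alpha>" if h: "\<alpha>0 \<ge> 1" "\<alpha> \<ge> 1" "\<zeta> \<alpha> = \<alpha>" for \<alpha>0 \<alpha>
  proof -
    have ind: "(\<zeta> ^^ p) \<alpha>0 \<ge> 1 \<and> \<bar>(\<zeta> ^^ p) \<alpha>0 - \<alpha>\<bar> \<le> q ^ p * \<bar>\<alpha>0 - \<alpha>\<bar>" for p
    proof (induction p)
      case 0 then show ?case using h by simp
    next
      case (Suc p)
      have in1: "\<zeta> ((\<zeta> ^^ p) \<alpha>0) \<ge> 1" using part1 Suc.IH by auto
      have "\<bar>\<zeta> ((\<zeta> ^^ p) \<alpha>0) - \<alpha>\<bar> = dist (\<zeta> ((\<zeta> ^^ p) \<alpha>0)) (\<zeta> \<alpha>)"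
        using h by (simp add: dist_real_def)
      also have "\<dots> \<le> q * dist ((\<zeta> ^^ p) \<alpha>0) \<alpha>" using lip[of "(\<zeta> ^^ p) \<alpha>0" \<alpha>] Suc.IH h by simp
      also have "\<dots> \<le> q * (q ^ p * \<bar>\<alpha>0 - \<alpha>\<bar>)"
        using Suc.IH \<open>q > 0\<close> by (intro mult_left_mono) (auto simp: dist_real_def)
      finally show ?case using in1 by simp
    qed
    have lim0: "(\<lambda>p. q ^ p * \<bar>\<alpha>0 - \<alpha>\<bar>) \<longlonglongrightarrow> 0"
    proof -
      have "(\<lambda>p. q ^ p) \<longlonglongrightarrow> 0" using \<open>q > 0\<close> \<open>q < 1\<close> by (intro LIMSEQ_power_zero) simp
      then show ?thesis by (rule tendsto_mult_left_zero)
    qed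
    have "(\<lambda>p. (\<zeta> ^^ p) \<alpha>0 - \<alpha>) \<longlonglongrightarrow> 0"
      by (rule Lim_null_comparison[OF _ lim0]) (use ind in simp)
    then show ?thesis by (simp add: Lim_null[symmetric])
  qed
  show ?thesis using part1 part2 part3 part4 by blast
qed


end
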